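(* Let $\mathbb{F}$ be a field of characteristic $p$, $\mathbb{E}$ an extension field, $f\in\mathbb{F}[x]$, and let $M\le\mathbb{E}^*$ be an automatically non-standard $f$-subgroup of size $m$. Let $L$ be a finite subgroup of $\mathbb{E}^*$ with $M\le L$, and let $k=|L|/|M|$. Then $L$ is an automatically non-standard $g$-subgroup for $g(x)=f(x^k)$.
   Context: $\phi_{p,m}$ is the $m$th cyclotomic polynomial reduced mod $p$ (if $p>0$); for $\gcd(m,p)=1$ its zeros are the primitive $m$th roots of unity. An $f$-sequence is a two-way infinite sequence with $f(\sigma)s=0$, $(\sigma s)_n=s_{n+1}$. Definition: for $m>1$ with $\gcd(m,p)=1$ if $p>0$, if $f\in\mathbb{F}[x]$ divides $(x^m-1)/((x-1)\phi_{p,m}(x))$ and an $f$-sequence $s$ of period $m$ (over an extension of $\mathbb{F}$) has $M=\{s_0,\ldots,s_{m-1}\}$ a subgroup of size $m$, then $M$ is an automatically non-standard $f$-subgroup. *)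

theory Defs
  imports "HOL-Computational_Algebra.Computational_Algebra"
begin

function cyclo :: "nat \<Rightarrow> int poly" where
  "cyclo n = (if n = 0 then 1 else
      ([:-1:] + monom 1 n) div (\<Prod>d\<in>{d. d dvd n \<and> d < n}. cyclo d))"
  by auto
termination
  by (relation "measure id") auto

(* phi_{p,m}: the cyclotomic polynomial reduced into the field 'a
   (characteristic p = CHAR('a)), i.e. reduced mod p. *)
definition cyclo_red :: "nat \<Rightarrow> 'a::field poly" where
  "cyclo_red m = map_poly of_int (cyclo m)"

(* emb : 'f \<rightarrow> 'e is a field embedding, i.e. 'e is an extension field of 'f *)
definition field_embedding :: "('f::field \<Rightarrow> 'e::field) \<Rightarrow> bool" where
  "field_embedding emb \<longleftrightarrow> emb 0 = 0 \<and> emb 1 = 1 \<and>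
     (\<forall>a b. emb (a + b) = emb a + emb b) \<and> (\<forall>a b. emb (a * b) = emb a * emb b)"

definition f_sequence :: "('f::field \<Rightarrow> 'e::field) \<Rightarrow> 'f poly \<Rightarrow> (int \<Rightarrow> 'e) \<Rightarrow> bool" where
  "f_sequence emb f s \<longleftrightarrow> (\<forall>n. (\<Sum>i\<le>degree f. emb (coeff f i) * s (n + int i)) = 0)"

definition mult_subgroup :: "'e::field set \<Rightarrow> bool" where
  "mult_subgroup M \<longleftrightarrow> M \<subseteq> - {0} \<and> 1 \<in> M \<and>
     (\<forall>a\<in>M. \<forall>b\<in>M. a * b \<in> M) \<and> (\<forall>a\<in>M. inverse a \<in> M)"

definition ans_subgroup :: "('f::field \<Rightarrow> 'e::field) \<Rightarrow> 'f poly \<Rightarrow> 'e set \<Rightarrow> bool" where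
  "ans_subgroup emb f M \<longleftrightarrow>
     (let m = card M; p = CHAR('f) in
       finite M \<and> m > 1 \<and> (p > 0 \<longrightarrow> coprime m p) \<and>
       f dvd ((monom 1 m - 1) div ([:-1, 1:] * cyclo_red m)) \<and>
       mult_subgroup M \<and>
       (\<exists>s. f_sequence emb f s \<and> (\<forall>n. s (n + int m) = s n) \<and>
            s ` {0..<int m} = M))"

end

theory Submission
  imports Defs
begin


definition ip :: "int poly \<Rightarrow> 'a::comm_ring_1 poly" where
  "ip p = map_poly of_int p"

lemma coeff_ip: "coeff (ip p) n = of_int (coeff p n)"
  by (simp add: ip_def coeff_map_poly)

lemma ip_add: "ip (p + q) = (ip p + ip q :: 'a::comm_ring_1 poly)"
  by (rule poly_eqI) (simp add: coeff_ip)

lemma ip_diff: "ip (p - q) = (ip p - ip q :: 'a::comm_ring_1 poly)"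
  by (rule poly_eqI) (simp add: coeff_ip)

lemma ip_mult: "ip (p * q) = (ip p * ip q :: 'a::comm_ring_1 poly)"
  by (rule poly_eqI) (simp add: coeff_ip coeff_mult)

lemma ip_1: "ip 1 = (1 :: 'a::comm_ring_1 poly)"
  by (simp add: ip_def)

lemma ip_monom: "ip (monom c n) = (monom (of_int c) n :: 'a::comm_ring_1 poly)"
  by (simp add: ip_def map_poly_monom)

lemma ip_pCons: "ip (pCons c p) = (pCons (of_int c) (ip p) :: 'a::comm_ring_1 poly)"
  by (simp add: ip_def map_poly_pCons)

lemma ip_const: "ip [:c:] = ([:of_int c:] :: 'a::comm_ring_1 poly)"
  by (rule poly_eqI) (simp add: coeff_ip coeff_pCons split: nat.split)

lemma ip_0: "ip 0 = (0 :: 'a::comm_ring_1 poly)"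
  by (simp add: ip_def)

lemma ip_prod: "ip (prod f A) = (\<Prod>x\<in>A. ip (f x) :: 'a::comm_ring_1 poly)"
  by (induction A rule: infinite_finite_induct) (auto simp: ip_1 ip_mult)

lemma ip_pcompose: "ip (pcompose p q) = (pcompose (ip p) (ip q) :: 'a::comm_ring_1 poly)"
proof (induction p rule: pCons_induct)
  case 0 thus ?case by (simp add: ip_0)
next
  case (pCons a p)
  thus ?case by (simp only: pcompose_pCons ip_add ip_mult ip_const ip_pCons ip_0 pCons_0_0)
qed

lemma lead_ip: "lead_coeff p = 1 \<Longrightarrow> lead_coeff (ip p :: 'a::{comm_ring_1,zero_neq_one} poly) = 1"
  unfolding ip_def by (subst lead_coeff_map_poly_nz) auto

lemma ip_nz: "lead_coeff p = 1 \<Longrightarrow> (ip p :: 'a::{comm_ring_1,zero_neq_one} poly) \<noteq> 0"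
  using lead_ip[of p, where 'a='a] by auto

lemma ip_complex_eq0: "(ip p :: complex poly) = 0 \<longleftrightarrow> p = 0"
  unfolding ip_def by (rule map_poly_eq_0_iff) auto

lemma degree_ip_complex: "degree (ip p :: complex poly) = degree p"
  unfolding ip_def by (rule degree_map_poly) auto

lemma monic_lift:
  fixes a b :: "int poly"
  assumes b: "lead_coeff b = 1" and d: "(ip b :: complex poly) dvd ip a"
  shows "b dvd a"
proof -
  have b0: "b \<noteq> 0" using b by auto
  obtain q r where qr: "pseudo_divmod a b = (q, r)" by (cases "pseudo_divmod a b") auto
  have "smult (coeff b (degree b) ^ (Suc (degree a) - degree b)) a = b * q + r"
    by (rule pseudo_divmod(1)[OF b0 qr])
  hence a: "a = b * q + r" using b by simp
  have r: "r = 0 \<or> degree r < degree b" by (rule pseudo_divmod(2)[OF b0 qr])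
  from d obtain Q where Q: "(ip a :: complex poly) = ip b * Q" by (auto elim: dvdE)
  have "(ip a :: complex poly) = ip b * ip q + ip r" by (subst a) (simp only: ip_add ip_mult)
  hence rr: "(ip r :: complex poly) = ip b * (Q - ip q)" unfolding Q by (simp add: right_diff_distrib)
  show ?thesis
  proof (cases "r = 0")
    case True thus ?thesis using a by simp
  next
    case r0: False
    hence "(ip r :: complex poly) \<noteq> 0" using ip_complex_eq0 by blast
    hence "Q - ip q \<noteq> 0" using rr by auto
    hence "degree (ip r :: complex poly) = degree (ip b :: complex poly) + degree (Q - ip q)"
      using \<open>Q - ip q \<noteq> 0\<close> ip_nz[OF b] unfolding rr by (intro degree_mult_eq) auto
    hence "degree r \<ge> degree b" by (simp add: degree_ip_complex)
    thus ?thesis using r r0 by simp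
  qed
qed

definition lin :: "complex set \<Rightarrow> complex poly" where
  "lin S = (\<Prod>z\<in>S. [:-z, 1:])"

lemma lin_dvd:
  assumes "finite S" "\<forall>z\<in>S. poly q z = 0"
  shows "lin S dvd q"
  using assms
proof (induction S arbitrary: q rule: finite_induct)
  case empty thus ?case by (simp add: lin_def)
next
  case (insert a S)
  have "poly q a = 0" using insert by auto
  then obtain q1 where q1: "q = [:-a, 1:] * q1" by (auto simp: poly_eq_0_iff_dvd elim: dvdE)
  have "\<forall>z\<in>S. poly q1 z = 0"
  proof
    fix z assume z: "z \<in> S"
    hence "z \<noteq> a" using insert by auto
    moreover have "poly q z = 0" using insert z by auto
    ultimately show "poly q1 z = 0" using q1 by simp
  qed
  hence h: "lin S dvd q1" using insert by auto
  have "lin (insert a S) = [:-a,1:] * lin S" using insert by (simp add: lin_def)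
  thus ?case unfolding q1 using h by (simp only: mult_dvd_mono[OF dvd_refl])
qed

lemma lin_lead: "lead_coeff (lin S) = 1"
  by (simp add: lin_def lead_coeff_prod)

lemma lin_nz: "lin S \<noteq> 0"
  using lin_lead[of S] by auto

lemma lin_degree: "finite S \<Longrightarrow> degree (lin S) = card S"
  by (simp add: lin_def degree_prod_eq_sum_degree)

lemma lin_union: "finite S \<Longrightarrow> finite T \<Longrightarrow> S \<inter> T = {} \<Longrightarrow> lin (S \<union> T) = lin S * lin T"
  by (simp add: lin_def prod.union_disjoint)

lemma monic_eq:
  fixes a b :: "'a::idom poly"
  assumes "lead_coeff a = 1" "lead_coeff b = 1" "degree a = degree b" "b dvd a"
  shows "a = b"
proof -
  obtain q where q: "a = b * q" using assms(4) by (auto elim: dvdE)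
  have a0: "a \<noteq> 0" "b \<noteq> 0" using assms by auto
  hence q0: "q \<noteq> 0" using q by auto
  have "degree q = 0" using q assms(3) a0 q0 by (simp add: degree_mult_eq)
  then obtain c where c: "q = [:c:]" by (metis degree_eq_zeroE)
  have "lead_coeff a = lead_coeff b * c" using q c by (simp add: lead_coeff_mult)
  hence "c = 1" using assms by simp
  thus ?thesis using q c by simp
qed



declare cyclo.simps[simp del]

definition Prim :: "nat \<Rightarrow> complex set" where
  "Prim n = {z. z ^ n = 1 \<and> (\<forall>j. 0 < j \<longrightarrow> j < n \<longrightarrow> z ^ j \<noteq> 1)}"

definition RU :: "nat \<Rightarrow> complex set" where
  "RU n = {z. z ^ n = 1}"

lemma finite_RU: "n > 0 \<Longrightarrow> finite (RU n)"
  unfolding RU_def by (rule finite_roots_unity) auto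

lemma card_RU: "n > 0 \<Longrightarrow> card (RU n) = n"
  unfolding RU_def by (rule card_roots_unity_eq)

lemma Prim_sub: "Prim n \<subseteq> RU n"
  by (auto simp: Prim_def RU_def)

lemma finite_Prim: "n > 0 \<Longrightarrow> finite (Prim n)"
  using finite_RU Prim_sub finite_subset by blast

lemma ip_E: "ip (monom 1 n - 1) = (monom 1 n - 1 :: 'a::comm_ring_1 poly)"
  by (simp add: ip_diff ip_monom ip_1)

lemma E_alt: "(monom 1 n - 1 :: 'a::comm_ring_1 poly) = -1 + monom 1 n"
  by simp

lemma deg_E: "n > 0 \<Longrightarrow> degree (monom 1 n - 1 :: 'a::comm_ring_1 poly) = n"
  unfolding E_alt by (subst degree_add_eq_right) (auto simp: degree_monom_eq)

lemma lead_E: "n > 0 \<Longrightarrow> lead_coeff (monom 1 n - 1 :: 'a::comm_ring_1 poly) = 1"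
  unfolding E_alt by (subst lead_coeff_add_le) (auto simp: degree_monom_eq)

lemma RU_lin: "n > 0 \<Longrightarrow> lin (RU n) = monom 1 n - 1"
proof -
  assume n: "n > 0"
  have "lin (RU n) dvd monom 1 n - 1"
    by (rule lin_dvd) (auto simp: finite_RU n RU_def poly_monom)
  moreover have "degree (monom 1 n - 1 :: complex poly) = n"
    using n by (rule deg_E)
  moreover have "degree (lin (RU n)) = n" using n by (simp add: lin_degree finite_RU card_RU)
  ultimately show ?thesis
    using n lin_lead[of "RU n"] lead_E[OF n, where 'a=complex] by (intro monic_eq[symmetric]) auto
qed

lemma RU_decomp:
  assumes n: "n > 0"
  shows "RU n = (\<Union>d\<in>{d. d dvd n}. Prim d)"
proof
  show "(\<Union>d\<in>{d. d dvd n}. Prim d) \<subseteq> RU n"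
  proof clarify
    fix d z assume "d dvd n" "z \<in> Prim d"
    then obtain c where "n = d * c" "z ^ d = 1" by (auto simp: Prim_def)
    thus "z \<in> RU n" by (simp add: RU_def power_mult)
  qed
next
  show "RU n \<subseteq> (\<Union>d\<in>{d. d dvd n}. Prim d)"
  proof
    fix z assume z: "z \<in> RU n"
    hence zn: "z ^ n = 1" by (simp add: RU_def)
    define d where "d = (LEAST j. 0 < j \<and> z ^ j = 1)"
    have d: "0 < d \<and> z ^ d = 1" unfolding d_def by (rule LeastI[of _ n]) (use n zn in auto)
    have dmin: "\<And>j. 0 < j \<Longrightarrow> j < d \<Longrightarrow> z ^ j \<noteq> 1"
      unfolding d_def using not_less_Least by blast
    have "z ^ n = z ^ (d * (n div d) + n mod d)" by simp
    also have "\<dots> = z ^ (n mod d)" by (simp only: power_add power_mult) (simp add: d)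
    finally have "z ^ (n mod d) = 1" using zn by simp
    hence "n mod d = 0" using dmin[of "n mod d"] d by (meson mod_less_divisor neq0_conv)
    hence "d dvd n" by auto
    moreover have "z \<in> Prim d" using d dmin by (auto simp: Prim_def)
    ultimately show "z \<in> (\<Union>d\<in>{d. d dvd n}. Prim d)" by blast
  qed
qed

lemma Prim_disj:
  assumes "0 < d" "0 < e" "d \<noteq> e"
  shows "Prim d \<inter> Prim e = {}"
proof -
  { fix a b z assume "0 < a" "a < b" "z \<in> Prim a" "z \<in> Prim b"
    hence False by (auto simp: Prim_def) }
  thus ?thesis using assms by (cases "d < e") (auto, (meson linorder_neqE_nat)+)
qed

lemma cyclo_eq: "cyclo n = (if n = 0 then 1 else
      (monom 1 n - 1) div (\<Prod>d\<in>{d. d dvd n \<and> d < n}. cyclo d))"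
proof -
  have "[:-1:] + monom 1 n = (monom 1 n - 1 :: int poly)"
    by (simp add: one_pCons)
  thus ?thesis by (subst cyclo.simps) simp
qed

lemma cyclo_main: "n > 0 \<Longrightarrow> ip (cyclo n) = lin (Prim n) \<and> lead_coeff (cyclo n) = 1"
proof (induction n rule: less_induct)
  case (less n)
  define D where "D = {d. d dvd n \<and> d < n}"
  define P where "P = (\<Prod>d\<in>D. cyclo d)"
  define U where "U = (\<Union>d\<in>D. Prim d)"
  have finD: "finite D" unfolding D_def by (rule finite_subset[of _ "{..<n}"]) auto
  have Dpos: "\<And>d. d \<in> D \<Longrightarrow> 0 < d" using less.prems by (auto simp: D_def intro: Nat.gr0I)
  have IH: "\<And>d. d \<in> D \<Longrightarrow> ip (cyclo d) = lin (Prim d) \<and> lead_coeff (cyclo d) = 1"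
    using less.IH Dpos by (auto simp: D_def)
  have finU: "finite U" unfolding U_def using finD Dpos finite_Prim by auto
  have ipP: "(ip P :: complex poly) = lin U"
  proof -
    have "(ip P :: complex poly) = (\<Prod>d\<in>D. lin (Prim d))"
      unfolding P_def ip_prod using IH by simp
    also have "\<dots> = lin U" unfolding lin_def U_def
      by (rule prod.UNION_disjoint[symmetric]) (use finD Dpos finite_Prim Prim_disj in auto)
    finally show ?thesis .
  qed
  have leadP: "lead_coeff P = 1" unfolding P_def lead_coeff_prod using IH by simp
  have RUeq: "RU n = U \<union> Prim n"
    using RU_decomp[OF less.prems] by (auto simp: U_def D_def, metis dvd_imp_le le_neq_implies_less less.prems)
  have disj: "U \<inter> Prim n = {}"
  proof -
    { fix d assume "d \<in> D" hence "Prim d \<inter> Prim n = {}"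
        using Prim_disj[of d n] Dpos less.prems by (auto simp: D_def) }
    thus ?thesis by (auto simp: U_def)
  qed
  have linRU: "lin (RU n) = lin U * lin (Prim n)"
    using RUeq disj finU finite_Prim[OF less.prems] by (simp add: lin_union)
  have "(ip P :: complex poly) dvd ip (monom 1 n - 1)"
    unfolding ipP ip_E RU_lin[OF less.prems, symmetric] linRU by simp
  hence Pdvd: "P dvd monom 1 n - 1" by (rule monic_lift[OF leadP])
  have cyc: "cyclo n = (monom 1 n - 1) div P"
    using less.prems by (subst cyclo_eq) (simp add: P_def D_def)
  have E: "monom 1 n - 1 = P * cyclo n" unfolding cyc using Pdvd by simp
  have "lin U * lin (Prim n) = lin (RU n)" by (simp add: linRU)
  also have "\<dots> = ip (monom 1 n - 1)" by (simp add: RU_lin less.prems ip_E)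
  also have "\<dots> = ip (P * cyclo n)" by (simp only: E)
  also have "\<dots> = lin U * (ip (cyclo n) :: complex poly)" by (simp only: ip_mult ipP)
  finally have "lin U * lin (Prim n) = lin U * (ip (cyclo n) :: complex poly)" .
  hence "ip (cyclo n) = lin (Prim n)" using lin_nz by simp
  moreover have "lead_coeff (monom 1 n - 1 :: int poly) = lead_coeff P * lead_coeff (cyclo n)"
    by (simp only: E lead_coeff_mult)
  hence "lead_coeff (cyclo n) = 1" using lead_E[OF less.prems, where 'a=int] leadP by (metis mult_1)
  ultimately show ?case by simp
qed



declare mult_pCons_left[simp del]

lemma m1_poly: "[:-1:] = (-1 :: 'a::comm_ring_1 poly)"
  by (simp add: one_pCons)

lemma mk1: "m > 1 \<Longrightarrow> k > 0 \<Longrightarrow> m * k > (1::nat)"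
proof -
  assume "m > 1" "k > 0"
  moreover hence "m \<le> m * k" by simp
  ultimately show ?thesis by linarith
qed

lemma ip_lin1: "ip [:-1, 1:] = ([:-1, 1:] :: 'a::comm_ring_1 poly)"
  by (simp add: ip_pCons ip_const ip_0)

lemma lead_D: "m > 0 \<Longrightarrow> lead_coeff ([:-1, 1:] * cyclo m) = 1"
  using cyclo_main[of m] by (simp add: lead_coeff_mult)

lemma ip_D: "m > 1 \<Longrightarrow> (ip ([:-1, 1:] * cyclo m) :: complex poly) = lin (insert 1 (Prim m))"
proof -
  assume m: "m > 1"
  have "1 \<notin> Prim m" using m by (auto simp: Prim_def intro!: exI[of _ 1])
  hence "lin (insert 1 (Prim m)) = [:-1, 1:] * lin (Prim m)"
    using finite_Prim[of m] m by (simp add: lin_def)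
  thus ?thesis using cyclo_main[of m] m by (simp add: ip_mult ip_lin1)
qed

lemma B1:
  assumes m: "m > 1"
  shows "\<exists>A. monom 1 m - 1 = ([:-1, 1:] * cyclo m) * A"
proof -
  have "lin (insert 1 (Prim m)) dvd lin (RU m)"
    unfolding lin_def by (rule prod_dvd_prod_subset) (use m finite_RU Prim_sub in \<open>auto simp: RU_def\<close>)
  hence "(ip ([:-1, 1:] * cyclo m) :: complex poly) dvd ip (monom 1 m - 1)"
    using m by (simp add: ip_D ip_E RU_lin)
  hence "([:-1, 1:] * cyclo m) dvd monom 1 m - 1"
    using m by (intro monic_lift[OF lead_D]) auto
  thus ?thesis by (auto elim: dvdE)
qed

lemma poly_lin_zero: "finite S \<Longrightarrow> w \<in> S \<Longrightarrow> poly (lin S) w = 0"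
  by (auto simp: lin_def poly_prod prod_zero_iff)

lemma pc_monom: "pcompose (monom 1 m) q = (q ^ m :: 'a::comm_ring_1 poly)"
  by (simp add: pcompose_altdef map_poly_monom poly_monom one_pCons[symmetric])

lemma pc_monom2: "pcompose (monom 1 m) (monom 1 k) = (monom 1 (m * k) :: 'a::comm_ring_1 poly)"
  by (simp add: pc_monom monom_power mult.commute)

lemma pc_lin1: "pcompose [:-1, 1:] q = (q - 1 :: 'a::comm_ring_1 poly)"
  by (simp add: pcompose_pCons one_pCons[symmetric] pcompose_1 m1_poly)

lemma B2:
  assumes m: "m > 1" and k: "k > 0" and n: "n = m * k"
  shows "([:-1, 1:] * cyclo n) dvd (monom 1 k - 1) * pcompose (cyclo m) (monom 1 k)"
proof -
  have n1: "n > 1" using mk1[OF m k] n by simp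
  have ipR: "(ip ((monom 1 k - 1) * pcompose (cyclo m) (monom 1 k)) :: complex poly)
      = (monom 1 k - 1) * pcompose (lin (Prim m)) (monom 1 k)"
    using cyclo_main[of m] m by (simp add: ip_mult ip_E ip_pcompose ip_monom)
  have "lin (insert 1 (Prim n)) dvd (monom 1 k - 1) * pcompose (lin (Prim m)) (monom 1 k)"
  proof (rule lin_dvd)
    show "finite (insert 1 (Prim n))" using finite_Prim[of n] n1 by simp
  next
    show "\<forall>z\<in>insert 1 (Prim n). poly ((monom 1 k - 1) * pcompose (lin (Prim m)) (monom 1 k)) z = 0"
    proof
      fix z assume z: "z \<in> insert 1 (Prim n)"
      show "poly ((monom 1 k - 1) * pcompose (lin (Prim m)) (monom 1 k)) z = 0"
      proof (cases "z = 1")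
        case True thus ?thesis by (simp add: poly_monom)
      next
        case False
        hence zp: "z \<in> Prim n" using z by simp
        have "z ^ k \<in> Prim m"
        proof -
          have "(z ^ k) ^ m = 1" using zp n by (simp add: Prim_def flip: power_mult) (simp add: mult.commute)
          moreover have "(z ^ k) ^ j \<noteq> 1" if "0 < j" "j < m" for j
          proof -
            have "0 < k * j" "k * j < n" using that k n by auto
            thus ?thesis using zp by (simp add: Prim_def flip: power_mult)
          qed
          ultimately show ?thesis by (simp add: Prim_def)
        qed
        hence "poly (lin (Prim m)) (z ^ k) = 0" using finite_Prim[of m] m by (simp add: poly_lin_zero)
        thus ?thesis by (simp add: poly_pcompose poly_monom)
      qed
    qed
  qed
  hence "(ip ([:-1, 1:] * cyclo n) :: complex poly) dvd ip ((monom 1 k - 1) * pcompose (cyclo m) (monom 1 k))"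
    using n1 by (simp add: ip_D ipR)
  thus ?thesis using n1 by (intro monic_lift[OF lead_D]) auto
qed

lemma key_int:
  assumes m: "m > 1" and k: "k > 0" and n: "n = m * k"
    and A: "monom 1 m - 1 = ([:-1, 1:] * cyclo m) * A"
    and B: "monom 1 n - 1 = ([:-1, 1:] * cyclo n) * B"
    and C: "(monom 1 k - 1) * pcompose (cyclo m) (monom 1 k) = ([:-1, 1:] * cyclo n) * C"
  shows "B = C * pcompose A (monom 1 k)"
proof -
  have "([:-1, 1:] * cyclo n) * B = pcompose (monom 1 m - 1) (monom 1 k)"
    by (simp add: B[symmetric] pcompose_diff pc_monom2 pcompose_1 n[symmetric])
  also have "\<dots> = ((monom 1 k - 1) * pcompose (cyclo m) (monom 1 k)) * pcompose A (monom 1 k)"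
    by (simp only: A pcompose_mult pc_lin1)
  also have "\<dots> = ([:-1, 1:] * cyclo n) * (C * pcompose A (monom 1 k))"
    by (simp only: C mult.assoc)
  finally show ?thesis using lead_D[of n] m k n by (auto simp del: mult_pCons_left)
qed

lemma div_ip:
  assumes "lead_coeff b = 1" "a = b * c"
  shows "(ip a :: 'a::field poly) div ip b = ip c"
  using assms ip_nz[OF assms(1), where 'a='a] by (simp add: ip_mult)

lemma poly_part:
  fixes f :: "'f::field poly"
  assumes m: "m > 1" and k: "k > 0"
    and f: "f dvd (monom 1 m - 1) div ([:-1, 1:] * cyclo_red m)"
  shows "pcompose f (monom 1 k) dvd (monom 1 (m * k) - 1) div ([:-1, 1:] * cyclo_red (m * k))"
proof -
  define n where "n = m * k"
  have n1: "n > 1" using mk1[OF m k] n_def by simp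
  obtain A where A: "monom 1 m - 1 = ([:-1, 1:] * cyclo m) * A" using B1[OF m] by blast
  obtain B where B: "monom 1 n - 1 = ([:-1, 1:] * cyclo n) * B" using B1[OF n1] by blast
  obtain C where C: "(monom 1 k - 1) * pcompose (cyclo m) (monom 1 k) = ([:-1, 1:] * cyclo n) * C"
    using B2[OF m k n_def] by (auto elim: dvdE)
  have BC: "B = C * pcompose A (monom 1 k)" by (rule key_int[OF m k n_def A B C])
  have cr: "\<And>j. (cyclo_red j :: 'f poly) = ip (cyclo j)" by (simp add: cyclo_red_def ip_def)
  have qm: "(monom 1 m - 1 :: 'f poly) div ([:-1, 1:] * cyclo_red m) = ip A"
    unfolding cr ip_E[symmetric, where 'a='f] ip_lin1[symmetric, where 'a='f] ip_mult[symmetric]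
    by (rule div_ip[OF lead_D A]) (use m in auto)
  have qn: "(monom 1 n - 1 :: 'f poly) div ([:-1, 1:] * cyclo_red n) = ip B"
    unfolding cr ip_E[symmetric, where 'a='f] ip_lin1[symmetric, where 'a='f] ip_mult[symmetric]
    by (rule div_ip[OF lead_D B]) (use n1 in auto)
  have "(ip B :: 'f poly) = ip C * pcompose (ip A) (monom 1 k)"
    by (simp add: BC ip_mult ip_pcompose ip_monom)
  moreover have "pcompose f (monom 1 k) dvd pcompose (ip A) (monom 1 k)"
    using f unfolding qm by (auto elim!: dvdE simp: pcompose_mult)
  ultimately show ?thesis using qn by (simp add: n_def)
qed



lemma emb_props:
  assumes "field_embedding emb"
  shows "emb 0 = 0" "emb 1 = 1" "emb (a + b) = emb a + emb b" "emb (a * b) = emb a * emb b"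
  using assms by (auto simp: field_embedding_def)

lemma emb_zero_iff:
  assumes e: "field_embedding (emb :: 'f::field \<Rightarrow> 'e::field)"
  shows "emb a = 0 \<longleftrightarrow> a = 0"
proof
  assume h: "emb a = 0"
  show "a = 0"
  proof (rule ccontr)
    assume "a \<noteq> 0"
    hence "emb (a * inverse a) = 1" using emb_props(2)[OF e] by simp
    thus False using h emb_props(4)[OF e] by simp
  qed
qed (use emb_props(1)[OF e] in simp)

lemma emb_of_nat:
  assumes e: "field_embedding (emb :: 'f::field \<Rightarrow> 'e::field)"
  shows "emb (of_nat n) = of_nat n"
  by (induction n) (simp_all add: emb_props[OF e])

lemma CHAR_emb:
  assumes e: "field_embedding (emb :: 'f::field \<Rightarrow> 'e::field)"
  shows "CHAR('e) = CHAR('f)"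
proof -
  have "\<And>n. CHAR('e) dvd n \<longleftrightarrow> CHAR('f) dvd n"
  proof -
    fix n
    have "(of_nat n :: 'e) = 0 \<longleftrightarrow> (of_nat n :: 'f) = 0"
      using emb_zero_iff[OF e, of "of_nat n"] emb_of_nat[OF e, of n] by simp
    thus "CHAR('e) dvd n \<longleftrightarrow> CHAR('f) dvd n" by (simp add: of_nat_eq_0_iff_char_dvd)
  qed
  thus ?thesis by (meson dvd_antisym dvd_refl)
qed

lemma emb_sum:
  assumes e: "field_embedding emb"
  shows "emb (sum g A) = (\<Sum>x\<in>A. emb (g x))"
  by (induction A rule: infinite_finite_induct) (simp_all add: emb_props[OF e])

lemma pow_card:
  fixes L :: "'e::field set"
  assumes L: "mult_subgroup L" "finite L" and x: "x \<in> L"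
  shows "x ^ card L = 1"
proof -
  have nz: "\<And>y. y \<in> L \<Longrightarrow> y \<noteq> 0" using L by (auto simp: mult_subgroup_def)
  have x0: "x \<noteq> 0" using nz x by blast
  have invx: "inverse x \<in> L" and mulL: "\<And>a b. a \<in> L \<Longrightarrow> b \<in> L \<Longrightarrow> a * b \<in> L"
    using L x by (auto simp: mult_subgroup_def)
  have "(\<Prod>y\<in>L. x * y) = (\<Prod>y\<in>L. y)"
    by (rule prod.reindex_bij_witness[of _ "\<lambda>y. inverse x * y" "\<lambda>y. x * y"])
       (use x x0 invx mulL in \<open>auto simp: mult.assoc[symmetric]\<close>)
  hence "x ^ card L * (\<Prod>y\<in>L. y) = (\<Prod>y\<in>L. y)" by (simp add: prod.distrib)
  moreover have "(\<Prod>y\<in>L. y) \<noteq> 0" using L nz by (auto simp: prod_zero_iff)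
  ultimately show ?thesis by simp
qed

lemma card_coprime:
  fixes L :: "'e::field set"
  assumes L: "mult_subgroup L" "finite L" and p: "CHAR('e) > 0"
  shows "coprime (card L) CHAR('e)"
proof (rule ccontr)
  define p where "p = CHAR('e)"
  have pp: "prime p" unfolding p_def using p by (rule prime_CHAR_semidom)
  assume "\<not> coprime (card L) CHAR('e)"
  hence "p dvd card L" using pp by (metis coprime_commute p_def prime_imp_coprime)
  then obtain n' where n': "card L = p * n'" by (auto elim: dvdE)
  have Lne: "card L > 0" using L by (auto simp: mult_subgroup_def card_gt_0_iff)
  hence n'0: "n' > 0" using n' by (auto intro: Nat.gr0I)
  have p1: "p > 1" using pp prime_gt_1_nat by blast
  have lt: "n' < card L" using n' p1 n'0 by simp
  have sub: "L \<subseteq> {x. poly (monom 1 n' - 1 :: 'e poly) x = 0}"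
  proof
    fix x assume x: "x \<in> L"
    have "(x ^ n') ^ p = 1" using pow_card[OF L x] n' by (simp flip: power_mult add: mult.commute)
    moreover have "(x ^ n' + (-1)) ^ p = (x ^ n') ^ p + (-1) ^ p"
      by (rule freshmans_dream) (use pp p_def in auto)
    moreover have "(-1 :: 'e) ^ p = - (1 ^ p)" by (rule minus_power_prime_CHAR) (use pp p_def in auto)
    ultimately have "(x ^ n' - 1) ^ p = 0" by simp
    hence "x ^ n' = 1" by simp
    thus "x \<in> {x. poly (monom 1 n' - 1 :: 'e poly) x = 0}" by (simp add: poly_monom)
  qed
  have "card L \<le> card {x. poly (monom 1 n' - 1 :: 'e poly) x = 0}"
  proof (rule card_mono[OF _ sub])
    show "finite {x. poly (monom 1 n' - 1 :: 'e poly) x = 0}"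
      by (rule poly_roots_finite) (use deg_E[OF n'0, where 'a='e] n'0 in auto)
  qed
  also have "\<dots> \<le> degree (monom 1 n' - 1 :: 'e poly)"
    by (rule card_poly_roots_bound) (use deg_E[OF n'0, where 'a='e] n'0 in auto)
  also have "\<dots> = n'" by (rule deg_E[OF n'0])
  finally show False using lt by simp
qed



lemma cosets:
  fixes M L :: "'e::field set"
  assumes M: "mult_subgroup M" "finite M" and L: "mult_subgroup L" "finite L" and hML: "M \<subseteq> L"
  shows "\<exists>rep. card L = card M * (card L div card M) \<and>
           L = (\<Union>i<card L div card M. (\<lambda>x. rep i * x) ` M)"
proof -
  define cos where "cos a = (\<lambda>x. a * x) ` M" for a
  have mulL: "\<And>a b. a \<in> L \<Longrightarrow> b \<in> L \<Longrightarrow> a * b \<in> L" using L by (auto simp: mult_subgroup_def)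
  have mulM: "\<And>a b. a \<in> M \<Longrightarrow> b \<in> M \<Longrightarrow> a * b \<in> M" using M by (auto simp: mult_subgroup_def)
  have invM: "\<And>a. a \<in> M \<Longrightarrow> inverse a \<in> M" using M by (auto simp: mult_subgroup_def)
  have nzL: "\<And>a. a \<in> L \<Longrightarrow> a \<noteq> 0" using L by (auto simp: mult_subgroup_def)
  have oneM: "1 \<in> M" using M by (auto simp: mult_subgroup_def)
  have cosL: "\<And>a. a \<in> L \<Longrightarrow> cos a \<subseteq> L" using hML mulL by (auto simp: cos_def)
  have incos: "\<And>a. a \<in> cos a" using oneM by (force simp: cos_def)
  have cardcos: "\<And>a. a \<in> L \<Longrightarrow> card (cos a) = card M"
    unfolding cos_def using nzL by (intro card_image) (auto simp: inj_on_def)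
  have sub: "cos b \<subseteq> cos a" if "c \<in> cos a" "c \<in> cos b" "a \<in> L" "b \<in> L" for a b c
  proof
    from that obtain x y where xy: "x \<in> M" "y \<in> M" "c = a * x" "c = b * y" by (auto simp: cos_def)
    have y0: "y \<noteq> 0" using xy hML nzL by auto
    have b: "b = a * (x * inverse y)" using xy y0 by (simp add: field_simps)
    fix w assume "w \<in> cos b"
    then obtain z where z: "z \<in> M" "w = b * z" by (auto simp: cos_def)
    have "w = a * (x * inverse y * z)" using z b by (simp add: mult.assoc)
    moreover have "x * inverse y * z \<in> M" using xy z mulM invM by auto
    ultimately show "w \<in> cos a" by (auto simp: cos_def)
  qed
  define R where "R = cos ` L"
  have finR: "finite R" using L by (simp add: R_def)
  have UR: "\<Union>R = L" using cosL incos by (auto simp: R_def)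
  have disjR: "c1 \<inter> c2 = {}" if h1: "c1 \<in> R" and h2: "c2 \<in> R" and h3: "c1 \<noteq> c2" for c1 c2
  proof (rule ccontr)
    assume "c1 \<inter> c2 \<noteq> {}"
    then obtain c where "c \<in> c1" "c \<in> c2" by blast
    moreover obtain a b where "a \<in> L" "b \<in> L" "c1 = cos a" "c2 = cos b" using h1 h2 by (auto simp: R_def)
    ultimately have "c1 = c2" using sub by (metis subset_antisym)
    thus False using h3 by simp
  qed
  have "card M * card R = card (\<Union>R)"
    by (rule card_partition[OF finR]) (use UR L cardcos disjR in \<open>auto simp: R_def\<close>)
  hence cL: "card L = card M * card R" using UR by simp
  have cM: "card M > 0" using M oneM by (auto simp: card_gt_0_iff)
  hence kR: "card L div card M = card R" using cL by simp
  obtain h where h: "bij_betw h {0..<card R} R" using ex_bij_betw_nat_finite[OF finR] by blast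
  define rep where "rep i = (SOME a. a \<in> L \<and> cos a = h i)" for i
  have rep: "rep i \<in> L \<and> cos (rep i) = h i" if "i < card R" for i
  proof -
    have "h i \<in> R" using h that by (auto simp: bij_betw_def)
    then obtain a where "a \<in> L" "cos a = h i" by (auto simp: R_def)
    thus ?thesis unfolding rep_def by (rule someI[where P="\<lambda>a. a \<in> L \<and> cos a = h i", OF conjI])
  qed
  have "L = (\<Union>i<card R. cos (rep i))"
  proof -
    have "(\<Union>i<card R. cos (rep i)) = (\<Union>i<card R. h i)" using rep by auto
    also have "\<dots> = \<Union>(h ` {0..<card R})" by (simp add: atLeast0LessThan)
    also have "\<dots> = \<Union>R" using h by (simp add: bij_betw_def)
    finally show ?thesis using UR by simp
  qed
  thus ?thesis using cL kR by (intro exI[of _ rep]) (simp add: cos_def)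
qed

lemma div_lt_aux: "\<lbrakk>0 \<le> (j::int); j < int m * int k; 0 < k\<rbrakk> \<Longrightarrow> j div int k < int m"
proof -
  assume a: "0 \<le> j" "j < int m * int k" "0 < k"
  have "j div int k * int k \<le> j"
    using div_mult_mod_eq[of j "int k"] pos_mod_sign[of "int k" j] a by linarith
  hence "j div int k * int k < int m * int k" using a by linarith
  thus ?thesis using a by (simp add: mult_less_cancel_right)
qed

lemma pcompose_monom_sum:
  fixes f :: "'a::comm_ring_1 poly"
  shows "pcompose f (monom 1 k) = (\<Sum>l\<le>degree f. monom (coeff f l) (k * l))"
proof -
  have "pcompose f (monom 1 k) = poly (map_poly (\<lambda>x. [:x:]) f) (monom 1 k)"
    by (rule pcompose_altdef)
  also have "\<dots> = (\<Sum>l\<le>degree f. [:coeff f l:] * (monom 1 k) ^ l)"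
    by (simp add: poly_altdef degree_map_poly coeff_map_poly)
  also have "\<dots> = (\<Sum>l\<le>degree f. monom (coeff f l) (k * l))"
    by (simp add: monom_power mult.commute smult_monom)
  finally show ?thesis .
qed

lemma seq_construct:
  fixes emb :: "'f::field \<Rightarrow> 'e::field"
  assumes e: "field_embedding emb" and k: "k > 0" and m: "m > 0"
    and fs: "f_sequence emb f s" and per: "\<forall>n. s (n + int m) = s n"
    and img: "s ` {0..<int m} = M"
    and Lrep: "L = (\<Union>i<k. (\<lambda>x. rep i * x) ` M)"
  shows "\<exists>t. f_sequence emb (pcompose f (monom 1 k)) t \<and> (\<forall>n. t (n + int (m * k)) = t n) \<and>
             t ` {0..<int (m * k)} = L"
proof -
  define t where "t j = rep (nat (j mod int k)) * s (j div int k)" for j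
  have ki: "int k > 0" using k by simp
  have fseq: "f_sequence emb (pcompose f (monom 1 k)) t"
    unfolding f_sequence_def
  proof
    fix n0 :: int
    define g where "g = pcompose f (monom 1 k)"
    define df where "df = degree f"
    have dg: "degree g = df * k" by (simp add: g_def df_def degree_pcompose degree_monom_eq)
    have cg: "coeff g i = (\<Sum>l\<le>df. if k * l = i then coeff f l else 0)" for i
      by (simp add: g_def df_def pcompose_monom_sum coeff_sum coeff_monom)
    have shift: "t (n0 + int (k * l)) = rep (nat (n0 mod int k)) * s (n0 div int k + int l)" for l
    proof -
      have "(n0 + int k * int l) mod int k = n0 mod int k" by simp
      moreover have "(n0 + int k * int l) div int k = n0 div int k + int l" using ki by simp
      ultimately show ?thesis by (simp add: t_def)
    qed
    have "(\<Sum>i\<le>degree g. emb (coeff g i) * t (n0 + int i))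
        = (\<Sum>i\<le>df * k. \<Sum>l\<le>df. if k * l = i then emb (coeff f l) * t (n0 + int i) else 0)"
      unfolding dg cg emb_sum[OF e] sum_distrib_right by (intro sum.cong refl) (simp add: emb_props(1)[OF e])
    also have "\<dots> = (\<Sum>l\<le>df. \<Sum>i\<le>df * k. if k * l = i then emb (coeff f l) * t (n0 + int i) else 0)"
      by (rule sum.swap)
    also have "\<dots> = (\<Sum>l\<le>df. emb (coeff f l) * t (n0 + int (k * l)))"
    proof (rule sum.cong[OF refl])
      fix l assume "l \<in> {..df}"
      hence "k * l \<le> df * k" by (simp add: mult.commute)
      thus "(\<Sum>i\<le>df * k. if k * l = i then emb (coeff f l) * t (n0 + int i) else 0) =
            emb (coeff f l) * t (n0 + int (k * l))"
        by (simp add: sum.delta')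
    qed
    also have "\<dots> = (\<Sum>l\<le>df. emb (coeff f l) * (rep (nat (n0 mod int k)) * s (n0 div int k + int l)))"
      by (simp only: shift)
    also have "\<dots> = rep (nat (n0 mod int k)) * (\<Sum>l\<le>df. emb (coeff f l) * s (n0 div int k + int l))"
      by (simp add: sum_distrib_left mult_ac)
    also have "\<dots> = 0" using fs by (simp add: f_sequence_def df_def)
    finally show "(\<Sum>i\<le>degree (pcompose f (monom 1 k)). emb (coeff (pcompose f (monom 1 k)) i) * t (n0 + int i)) = 0"
      by (simp add: g_def)
  qed
  have tper: "\<forall>n. t (n + int (m * k)) = t n"
  proof
    fix n :: int
    have "(n + int m * int k) mod int k = n mod int k" by simp
    moreover have "(n + int m * int k) div int k = n div int k + int m" using ki by simp
    ultimately show "t (n + int (m * k)) = t n" by (simp add: t_def per)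
  qed
  have timg: "t ` {0..<int (m * k)} = L"
  proof
    show "t ` {0..<int (m * k)} \<subseteq> L"
    proof
      fix x assume "x \<in> t ` {0..<int (m * k)}"
      then obtain j where j: "0 \<le> j" "j < int m * int k" "x = t j" by auto
      have q: "0 \<le> j div int k" "j div int k < int m"
        using j ki k by (auto simp: div_lt_aux pos_imp_zdiv_nonneg_iff)
      have r: "nat (j mod int k) < k" using ki by (simp add: nat_less_iff)
      have "s (j div int k) \<in> M" using q img by auto
      thus "x \<in> L" using r unfolding Lrep j(3) t_def by blast
    qed
  next
    show "L \<subseteq> t ` {0..<int (m * k)}"
    proof
      fix x assume "x \<in> L"
      then obtain i y where iy: "i < k" "y \<in> M" "x = rep i * y" unfolding Lrep by blast
      then obtain q where q: "0 \<le> q" "q < int m" "y = s q" using img by auto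
      define j where "j = q * int k + int i"
      have jm: "j mod int k = int i" using iy q by (simp add: j_def)
      have jd: "j div int k = q" using iy q by (simp add: j_def)
      have "(q + 1) * int k \<le> int m * int k" using q ki by (intro mult_right_mono) auto
      hence "j < int (m * k)" using iy by (simp add: j_def algebra_simps)
      moreover have "0 \<le> j" using q by (simp add: j_def)
      moreover have "t j = x" using iy q jm jd by (simp add: t_def)
      ultimately show "x \<in> t ` {0..<int (m * k)}" by force
    qed
  qed
  show ?thesis using fseq tper timg by blast
qed



theorem mainTheorem12:
  fixes emb :: "'f::field \<Rightarrow> 'e::field"
    and f :: "'f poly" and M L :: "'e set" and k :: nat
  assumes "field_embedding emb"
    and "ans_subgroup emb f M"
    and "finite L" and "mult_subgroup L" and "M \<subseteq> L"
    and "k = card L div card M"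
  shows "ans_subgroup emb (f \<circ>\<^sub>p monom 1 k) L"
proof -
  note e = assms(1)
  have finM: "finite M" and m1: "card M > 1"
    and fdvd: "f dvd (monom 1 (card M) - 1) div ([:-1, 1:] * cyclo_red (card M))"
    and sgM: "mult_subgroup M"
    and exs: "\<exists>s. f_sequence emb f s \<and> (\<forall>n. s (n + int (card M)) = s n) \<and> s ` {0..<int (card M)} = M"
    using assms(2) unfolding ans_subgroup_def Let_def by blast+
  obtain rep where cL: "card L = card M * k" and Lrep: "L = (\<Union>i<k. (\<lambda>x. rep i * x) ` M)"
    using cosets[OF sgM finM assms(4) assms(3) assms(5)] assms(6) by blast
  have Lpos: "card L > 0" using assms(3,4) by (auto simp: mult_subgroup_def card_gt_0_iff)
  hence k0: "k > 0" using cL by (auto intro: Nat.gr0I)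
  have m0: "card M > 0" using m1 by simp
  obtain s where s: "f_sequence emb f s" "\<forall>n. s (n + int (card M)) = s n" "s ` {0..<int (card M)} = M"
    using exs by blast
  obtain t where t: "f_sequence emb (pcompose f (monom 1 k)) t"
      "\<forall>n. t (n + int (card M * k)) = t n" "t ` {0..<int (card M * k)} = L"
    using seq_construct[OF e k0 m0 s(1) s(2) s(3) Lrep] by blast
  have L1: "card L > 1" using cL mk1[OF m1 k0] by simp
  have cop: "CHAR('f) > 0 \<longrightarrow> coprime (card L) CHAR('f)"
    using card_coprime[OF assms(4) assms(3)] CHAR_emb[OF e] by simp
  have gdvd: "pcompose f (monom 1 k) dvd (monom 1 (card L) - 1) div ([:-1, 1:] * cyclo_red (card L))"
    unfolding cL by (rule poly_part[OF m1 k0 fdvd])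
  show ?thesis
    unfolding ans_subgroup_def Let_def
    using assms(3) L1 cop gdvd assms(4) t unfolding cL[symmetric] by blast
qed


end
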